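(* Let $\varepsilon, D>0$. Let $(X_1,d_1)$ and $(X_2,d_2)$ be compact length spaces with closed measurement sets $S_1\subset X_1$ and $S_2\subset X_2$. Suppose that $\operatorname{diam}(X_1),\operatorname{diam}(X_2)<D$ and that both $(X_1,d_1)$ with $S_1$ and $(X_2,d_2)$ with $S_2$ are $\mathrm{BLIE}_\varepsilon$. If there is a homeomorphism $\phi\colon S_1\to S_2$, then \[ d_{GH}\big((X_1,d_1),(X_2,d_2)\big)\le \Big(\frac{2D}{\varepsilon}+1\Big)\, d^{H}_{C(S_1)}\big(\mathcal R_{X_1,S_1}(X_1),\mathcal R_{X_2,S_2,\phi}(X_2)\big). \] In particular, if the travel time data of $X_1$ and $X_2$ coincide, then $(X_1,d_1)$ and $(X_2,d_2)$ are isometric.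
   Context: A length space is a metric space $(X,d)$ in which $d(x,y)$ equals the infimum of the lengths $L(\gamma)=\sup\sum_i d(\gamma(t_{i-1}),\gamma(t_i))$ (supremum over partitions) of curves $\gamma$ from $x$ to $y$. For a compact length space $(X,d)$ and closed $S\subset X$, the travel time map is $\mathcal R_{X,S}\colon (X,d)\to (C(S),\|\cdot\|_\infty)$, $\mathcal R_{X,S}(p)=r_p$ with $r_p(z)=d(p,z)$ for $z\in S$; its image $\mathcal R_{X,S}(X)$ is the travel time data. A continuous map $f\colon (X,d_X)\to(Y,d_Y)$ is an $\varepsilon$-local isometry if $d_Y(f(p),f(q))=d_X(p,q)$ whenever $d_X(p,q)<\varepsilon$. $(X,d)$ with measurement set $S$ is $\mathrm{BLIE}_\varepsilon$ if $\mathcal R_{X,S}$ is a topological embedding and $\mathcal R_{X,S}^{-1}\colon(\mathcal R_{X,S}(X),\|\cdot\|_\infty)\to (X,d)$ is an $\varepsilon$-local isometry. For a homeomorphism $\phi\colon S_1\to S_2$, $\mathcal R_{X_2,S_2,\phi}(X_2):=\{d_2(q,\phi(\cdot))\colon S_1\to\mathbb R \mid q\in X_2\}\subset C(S_1)$. $d^H_{C(S_1)}$ is the Hausdorff distance in $(C(S_1),\|\cdot\|_\infty)$ and $d_{GH}$ the Gromov–Hausdorff distance. The travel time data of $X_1,X_2$ coincide if $d^H_{C(S_1)}(\mathcal R_{X_1,S_1}(X_1),\mathcal R_{X_2,S_2,\phi}(X_2))=0$ for some homeomorphism $\phi\colon S_1\to S_2$. *)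

theory Defs
  imports "HOL-Analysis.Analysis"
begin

abbreviation mtop :: "'a set \<Rightarrow> ('a \<Rightarrow> 'a \<Rightarrow> real) \<Rightarrow> 'a topology" where
  "mtop X d \<equiv> Metric_space.mtopology X d"

definition curve_length :: "('a \<Rightarrow> 'a \<Rightarrow> real) \<Rightarrow> (real \<Rightarrow> 'a) \<Rightarrow> ereal" where
  "curve_length d \<gamma> =
     (SUP nt \<in> {(n::nat, t::nat \<Rightarrow> real). t 0 = 0 \<and> t n = 1 \<and> (\<forall>i<n. t i \<le> t (Suc i))}.
        ereal (\<Sum>i<fst nt. d (\<gamma> (snd nt i)) (\<gamma> (snd nt (Suc i)))))"

definition curves_between :: "'a set \<Rightarrow> ('a \<Rightarrow> 'a \<Rightarrow> real) \<Rightarrow> 'a \<Rightarrow> 'a \<Rightarrow> (real \<Rightarrow> 'a) set" where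
  "curves_between X d x y =
     {\<gamma>. continuous_map (top_of_set {0..1}) (mtop X d) \<gamma> \<and> \<gamma> 0 = x \<and> \<gamma> 1 = y}"

definition length_space :: "'a set \<Rightarrow> ('a \<Rightarrow> 'a \<Rightarrow> real) \<Rightarrow> bool" where
  "length_space X d \<longleftrightarrow> Metric_space X d \<and>
     (\<forall>x\<in>X. \<forall>y\<in>X. ereal (d x y) = (INF \<gamma> \<in> curves_between X d x y. curve_length d \<gamma>))"

definition mdiam :: "'a set \<Rightarrow> ('a \<Rightarrow> 'a \<Rightarrow> real) \<Rightarrow> ereal" where
  "mdiam X d = (SUP x\<in>X. SUP y\<in>X. ereal (d x y))"

definition hausdorff_dist :: "('b \<Rightarrow> 'b \<Rightarrow> real) \<Rightarrow> 'b set \<Rightarrow> 'b set \<Rightarrow> ereal" where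
  "hausdorff_dist d A B =
     max (SUP a\<in>A. INF b\<in>B. ereal (d a b)) (SUP b\<in>B. INF a\<in>A. ereal (d a b))"

definition GH_dist :: "'a set \<Rightarrow> ('a \<Rightarrow> 'a \<Rightarrow> real) \<Rightarrow> 'b set \<Rightarrow> ('b \<Rightarrow> 'b \<Rightarrow> real) \<Rightarrow> ereal" where
  "GH_dist X1 d1 X2 d2 =
     (INF d \<in> {d. Metric_space (Inl ` X1 \<union> Inr ` X2) d
                \<and> (\<forall>x\<in>X1. \<forall>y\<in>X1. d (Inl x) (Inl y) = d1 x y)
                \<and> (\<forall>x\<in>X2. \<forall>y\<in>X2. d (Inr x) (Inr y) = d2 x y)}.
        hausdorff_dist d (Inl ` X1) (Inr ` X2))"

definition isometric :: "'a set \<Rightarrow> ('a \<Rightarrow> 'a \<Rightarrow> real) \<Rightarrow> 'b set \<Rightarrow> ('b \<Rightarrow> 'b \<Rightarrow> real) \<Rightarrow> bool" where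
  "isometric X1 d1 X2 d2 \<longleftrightarrow>
     (\<exists>f. bij_betw f X1 X2 \<and> (\<forall>x\<in>X1. \<forall>y\<in>X1. d2 (f x) (f y) = d1 x y))"

text \<open>Continuous real functions on the topological space T, represented extensionally
  (value undefined outside topspace T).\<close>
definition Cfun :: "'a topology \<Rightarrow> ('a \<Rightarrow> real) set" where
  "Cfun T = {f. continuous_map T euclideanreal f \<and> f \<in> extensional (topspace T)}"

text \<open>Sup-norm distance on functions on S (0 for S empty).\<close>
definition sup_dist :: "'a set \<Rightarrow> ('a \<Rightarrow> real) \<Rightarrow> ('a \<Rightarrow> real) \<Rightarrow> real" where
  "sup_dist S f g = Sup (insert 0 ((\<lambda>z. \<bar>f z - g z\<bar>) ` S))"

definition travel_time_map :: "('a \<Rightarrow> 'a \<Rightarrow> real) \<Rightarrow> 'a set \<Rightarrow> 'a \<Rightarrow> ('a \<Rightarrow> real)" where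
  "travel_time_map d S p = restrict (\<lambda>z. d p z) S"

definition travel_time_data :: "'a set \<Rightarrow> ('a \<Rightarrow> 'a \<Rightarrow> real) \<Rightarrow> 'a set \<Rightarrow> ('a \<Rightarrow> real) set" where
  "travel_time_data X d S = travel_time_map d S ` X"

definition travel_time_data_phi ::
  "'b set \<Rightarrow> ('b \<Rightarrow> 'b \<Rightarrow> real) \<Rightarrow> 'a set \<Rightarrow> ('a \<Rightarrow> 'b) \<Rightarrow> ('a \<Rightarrow> real) set" where
  "travel_time_data_phi X2 d2 S1 \<phi> = (\<lambda>q. restrict (\<lambda>z. d2 q (\<phi> z)) S1) ` X2"

definition local_isometry ::
  "real \<Rightarrow> 'a set \<Rightarrow> ('a \<Rightarrow> 'a \<Rightarrow> real) \<Rightarrow> 'b set \<Rightarrow> ('b \<Rightarrow> 'b \<Rightarrow> real) \<Rightarrow> ('a \<Rightarrow> 'b) \<Rightarrow> bool" where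
  "local_isometry \<epsilon> A dA B dB f \<longleftrightarrow>
     continuous_map (mtop A dA) (mtop B dB) f \<and>
     (\<forall>p\<in>A. \<forall>q\<in>A. dA p q < \<epsilon> \<longrightarrow> dB (f p) (f q) = dA p q)"

definition BLIE :: "real \<Rightarrow> 'a set \<Rightarrow> ('a \<Rightarrow> 'a \<Rightarrow> real) \<Rightarrow> 'a set \<Rightarrow> bool" where
  "BLIE \<epsilon> X d S \<longleftrightarrow>
     embedding_map (mtop X d) (mtop (Cfun (subtopology (mtop X d) S)) (sup_dist S))
       (travel_time_map d S) \<and>
     local_isometry \<epsilon> (travel_time_data X d S) (sup_dist S) X d
       (inv_into X (travel_time_map d S))"

end

theory Submission
  imports Defs
begin

lemma dist_cont:
  assumes ms: "Metric_space X d" and a: "a \<in> X"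
  shows "continuous_map (mtop X d) euclideanreal (d a)"
proof -
  have "continuous_map (mtop X d) (Metric_space.mtopology UNIV dist) (d a)"
    unfolding Metric_space.metric_continuous_map[OF ms Met_TC.Metric_space_axioms]
  proof (intro conjI ballI allI impI)
    fix b and \<epsilon>::real assume b: "b \<in> X" and e: "\<epsilon> > 0"
    show "\<exists>\<delta>>0. \<forall>x. x \<in> X \<and> d b x < \<delta> \<longrightarrow> dist (d a b) (d a x) < \<epsilon>"
    proof (intro exI[of _ \<epsilon>] conjI allI impI e)
      fix x assume x: "x \<in> X \<and> d b x < \<epsilon>"
      have "d a x \<le> d a b + d b x" using Metric_space.triangle[OF ms a b] x by blast
      moreover have "d a b \<le> d a x + d x b" using Metric_space.triangle[OF ms a _ b] x by blast
      moreover have "d x b = d b x" using Metric_space.commute[OF ms] by blast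
      ultimately show "dist (d a b) (d a x) < \<epsilon>" using x by (simp add: dist_real_def abs_less_iff)
    qed
  qed auto
  then show ?thesis by simp
qed

lemma point_on_curve:
  assumes LS: "length_space X d" and x: "x \<in> X" and y: "y \<in> X"
    and t: "0 \<le> t" "t \<le> d x y" and e: "e > 0"
  shows "\<exists>z\<in>X. d x z = t \<and> d z y \<le> d x y - t + e"
proof -
  have ms: "Metric_space X d" using LS length_space_def by blast
  have eq: "ereal (d x y) = (INF \<gamma> \<in> curves_between X d x y. curve_length d \<gamma>)"
    using LS x y unfolding length_space_def by blast
  have "(INF \<gamma> \<in> curves_between X d x y. curve_length d \<gamma>) < ereal (d x y + e)"
    unfolding eq[symmetric] using e by simp
  then obtain \<gamma> where g: "\<gamma> \<in> curves_between X d x y" and gl: "curve_length d \<gamma> < ereal (d x y + e)"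
    by (auto simp: INF_less_iff)
  have cm: "continuous_map (top_of_set {0..1}) (mtop X d) \<gamma>" and g0: "\<gamma> 0 = x" and g1: "\<gamma> 1 = y"
    using g unfolding curves_between_def by auto
  have "continuous_map (top_of_set {0..1}) euclideanreal (d x \<circ> \<gamma>)"
    using continuous_map_compose[OF cm dist_cont[OF ms x]] .
  then have co: "continuous_on {0..1} (\<lambda>s. d x (\<gamma> s))" by (simp add: o_def)
  have f0: "d x (\<gamma> 0) = 0" using g0 x ms by (simp add: Metric_space.zero)
  obtain s where s: "0 \<le> s" "s \<le> 1" "d x (\<gamma> s) = t"
    using IVT'[of "\<lambda>s. d x (\<gamma> s)" 0 t 1] co f0 g1 t by auto
  have zX: "\<gamma> s \<in> X"
    using cm s unfolding continuous_map_def by (auto simp: Metric_space.topspace_mtopology[OF ms])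
  define tt where "tt = (\<lambda>i::nat. if i = 0 then 0 else if i = 1 then s else (1::real))"
  have mem: "(2::nat, tt) \<in> {(n::nat, t::nat \<Rightarrow> real). t 0 = 0 \<and> t n = 1 \<and> (\<forall>i<n. t i \<le> t (Suc i))}"
    using s by (auto simp: tt_def less_Suc_eq numeral_2_eq_2)
  have "ereal (\<Sum>i<fst (2::nat, tt). d (\<gamma> (snd (2::nat,tt) i)) (\<gamma> (snd (2::nat,tt) (Suc i)))) \<le> curve_length d \<gamma>"
    unfolding curve_length_def by (rule SUP_upper[OF mem])
  then have "ereal (d x (\<gamma> s) + d (\<gamma> s) y) \<le> curve_length d \<gamma>"
    by (simp add: tt_def numeral_2_eq_2 g0 g1)
  from order.strict_trans1[OF this gl] have "d x (\<gamma> s) + d (\<gamma> s) y < d x y + e" by simp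
  then show ?thesis using zX s by (intro bexI[of _ "\<gamma> s"]) auto
qed

lemma chain:
  assumes LS: "length_space X d" and ms2: "Metric_space Y e"
    and R: "R \<subseteq> X \<times> Y" and tot: "\<forall>x\<in>X. \<exists>y. (x,y)\<in>R" and a: "a > 0" and c: "c \<ge> 0"
    and step: "\<And>x y x' y'. (x,y)\<in>R \<Longrightarrow> (x',y')\<in>R \<Longrightarrow> d x x' < a \<Longrightarrow> e y y' \<le> d x x' + c"
  shows "\<forall>x y x' y' \<eta>. (x,y)\<in>R \<longrightarrow> (x',y')\<in>R \<longrightarrow> d x x' < real n * a \<longrightarrow> \<eta> > 0
            \<longrightarrow> e y y' \<le> d x x' + real n * c + \<eta>"
proof (induction n)
  case 0
  have ms: "Metric_space X d" using LS length_space_def by blast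
  show ?case using Metric_space.nonneg[OF ms] by (metis of_nat_0 mult_zero_left not_less)
next
  case (Suc n)
  have ms: "Metric_space X d" using LS length_space_def by blast
  show ?case
  proof (intro allI impI)
    fix x y x' y' and \<eta>::real
    assume xy: "(x,y)\<in>R" and xy': "(x',y')\<in>R" and dl: "d x x' < real (Suc n) * a" and eta: "\<eta> > 0"
    have xX: "x \<in> X" "x' \<in> X" and yY: "y \<in> Y" "y' \<in> Y" using R xy xy' by auto
    have nc: "real n * c \<ge> 0" using c by simp
    show "e y y' \<le> d x x' + real (Suc n) * c + \<eta>"
    proof (cases "d x x' < a")
      case True
      then have "e y y' \<le> d x x' + c" using step xy xy' by blast
      then show ?thesis using nc eta by (simp add: algebra_simps)
    next
      case False
      define g where "g = real (Suc n) * a - d x x'"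
      have g: "g > 0" using dl g_def by simp
      define \<theta> where "\<theta> = min (a/2) (g/4)"
      define t where "t = a - \<theta>"
      define \<eta>0 where "\<eta>0 = min (g/4) (\<eta>/2)"
      have t0: "0 \<le> t" "t \<le> d x x'" "t < a" using False a g unfolding t_def \<theta>_def by auto
      have e0: "\<eta>0 > 0" using g eta \<eta>0_def by simp
      obtain z where z: "z \<in> X" "d x z = t" "d z x' \<le> d x x' - t + \<eta>0"
        using point_on_curve[OF LS xX(1) xX(2) t0(1) t0(2) e0] by blast
      obtain w where zw: "(z,w) \<in> R" using tot z(1) by blast
      have wY: "w \<in> Y" using R zw by auto
      have s1: "e y w \<le> t + c" using step[OF xy zw] z t0 by simp
      have "\<theta> \<le> g/4" "\<eta>0 \<le> g/4" unfolding \<theta>_def \<eta>0_def by auto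
      then have dz: "d z x' < real n * a"
        using z(3) g unfolding t_def g_def by (simp add: algebra_simps)
      have s2: "e w y' \<le> d z x' + real n * c + \<eta>/2"
        using Suc.IH zw xy' dz eta by simp
      have tri: "e y y' \<le> e y w + e w y'" using Metric_space.triangle[OF ms2 yY(1) wY yY(2)] .
      have "\<eta>0 \<le> \<eta>/2" unfolding \<eta>0_def by simp
      then show ?thesis using tri s1 s2 z(3) by (simp add: algebra_simps)
    qed
  qed
qed

lemma loc_iso_bound:
  assumes ms: "Metric_space X d" and S: "S \<subseteq> X" and B: "BLIE \<epsilon> X d S"
    and q: "q \<in> X" "q' \<in> X" and b: "b < \<epsilon>" "0 \<le> b"
    and pw: "\<forall>w\<in>S. \<bar>d q w - d q' w\<bar> \<le> b"
  shows "d q q' \<le> b"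
proof -
  let ?T = "travel_time_map d S"
  have "homeomorphic_map (mtop X d) (subtopology (mtop (Cfun (subtopology (mtop X d) S)) (sup_dist S))
          (?T ` topspace (mtop X d))) ?T"
    using B unfolding BLIE_def embedding_map_def by blast
  then have inj: "inj_on ?T X"
    using homeomorphic_imp_injective_map Metric_space.topspace_mtopology[OF ms] by metis
  have sd: "sup_dist S (?T q) (?T q') \<le> b"
    unfolding sup_dist_def travel_time_map_def
    by (rule cSup_least) (auto simp: pw b)
  have li: "\<forall>f\<in>travel_time_data X d S. \<forall>g\<in>travel_time_data X d S. sup_dist S f g < \<epsilon> \<longrightarrow>
      d (inv_into X ?T f) (inv_into X ?T g) = sup_dist S f g"
    using B unfolding BLIE_def local_isometry_def by blast
  have "d (inv_into X ?T (?T q)) (inv_into X ?T (?T q')) = sup_dist S (?T q) (?T q')"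
    using li q sd b unfolding travel_time_data_def by auto
  then show ?thesis using inv_into_f_f[OF inj q(1)] inv_into_f_f[OF inj q(2)] sd by simp
qed

lemma mdiam_bound:
  assumes "x \<in> X" "y \<in> X" "mdiam X d < ereal D"
  shows "d x y < D"
proof -
  have "ereal (d x y) \<le> mdiam X d"
    unfolding mdiam_def using assms by (intro SUP_upper2[of x] SUP_upper2[of y]) auto
  from order.strict_trans1[OF this assms(3)] show ?thesis by simp
qed

lemma haus_left:
  assumes "hausdorff_dist dd A B < ereal \<delta>" "a \<in> A"
  shows "\<exists>b\<in>B. dd a b < \<delta>"
proof -
  have "(INF b\<in>B. ereal (dd a b)) \<le> (SUP a\<in>A. INF b\<in>B. ereal (dd a b))"
    using assms(2) by (rule SUP_upper)
  also have "\<dots> \<le> hausdorff_dist dd A B" unfolding hausdorff_dist_def by simp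
  finally have "(INF b\<in>B. ereal (dd a b)) < ereal \<delta>" using assms(1) by simp
  then show ?thesis by (auto simp: INF_less_iff)
qed

lemma haus_right:
  assumes "hausdorff_dist dd A B < ereal \<delta>" "b \<in> B"
  shows "\<exists>a\<in>A. dd a b < \<delta>"
proof -
  have "(INF a\<in>A. ereal (dd a b)) \<le> (SUP b\<in>B. INF a\<in>A. ereal (dd a b))"
    using assms(2) by (rule SUP_upper)
  also have "\<dots> \<le> hausdorff_dist dd A B" unfolding hausdorff_dist_def by simp
  finally have "(INF a\<in>A. ereal (dd a b)) < ereal \<delta>" using assms(1) by simp
  then show ?thesis by (auto simp: INF_less_iff)
qed

lemma sup_dist_pw:
  assumes "bdd_above ((\<lambda>z. \<bar>f z - g z\<bar>) ` S)" "z \<in> S"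
  shows "\<bar>f z - g z\<bar> \<le> sup_dist S f g"
  unfolding sup_dist_def using assms by (intro cSup_upper) auto

lemma sup_dist_nonneg:
  assumes "bdd_above ((\<lambda>z. \<bar>f z - g z\<bar>) ` S)"
  shows "0 \<le> sup_dist S f g"
  unfolding sup_dist_def using assms by (intro cSup_upper) auto

locale corr =
  fixes X1 :: "'a set" and d1 and X2 :: "'b set" and d2 and R and r :: real
  assumes ms1: "Metric_space X1 d1" and ms2: "Metric_space X2 d2"
    and R: "R \<subseteq> X1 \<times> X2" and tot1: "\<forall>x\<in>X1. \<exists>y. (x,y)\<in>R" and tot2: "\<forall>y\<in>X2. \<exists>x. (x,y)\<in>R"
    and r: "r > 0"
    and dis: "\<And>x y x' y'. (x,y)\<in>R \<Longrightarrow> (x',y')\<in>R \<Longrightarrow> \<bar>d1 x x' - d2 y y'\<bar> \<le> 2*r"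
    and ne: "X1 \<noteq> {}"
begin

definition T where "T x y = (\<lambda>(a,b). d1 x a + d2 b y) ` R"
definition cross where "cross x y = r + Inf (T x y)"

lemma Rne: "R \<noteq> {}" using ne tot1 by blast

lemma bddT: "bdd_below (T x y)"
  unfolding T_def using Metric_space.nonneg[OF ms1] Metric_space.nonneg[OF ms2]
  by (intro bdd_belowI[of _ 0]) (auto intro: add_nonneg_nonneg)

lemma T_lower: "(a,b)\<in>R \<Longrightarrow> Inf (T x y) \<le> d1 x a + d2 b y"
  using bddT by (intro cInf_lower) (auto simp: T_def)

lemma T_greatest: "(\<And>a b. (a,b)\<in>R \<Longrightarrow> m \<le> d1 x a + d2 b y) \<Longrightarrow> m \<le> Inf (T x y)"
  using Rne by (intro cInf_greatest) (auto simp: T_def)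

lemma T_nonneg: "0 \<le> Inf (T x y)"
  using Metric_space.nonneg[OF ms1] Metric_space.nonneg[OF ms2]
  by (intro T_greatest) (auto intro: add_nonneg_nonneg)

lemma cross_pos: "cross x y > 0" using T_nonneg r cross_def by (smt (verit))

lemma A: assumes "x \<in> X1" "x' \<in> X1" shows "cross x y \<le> d1 x x' + cross x' y"
proof -
  have "Inf (T x y) - d1 x x' \<le> Inf (T x' y)"
  proof (rule T_greatest)
    fix a b assume ab: "(a,b) \<in> R"
    then have "a \<in> X1" using R by auto
    then have "d1 x a \<le> d1 x x' + d1 x' a" using Metric_space.triangle[OF ms1] assms by blast
    then show "Inf (T x y) - d1 x x' \<le> d1 x' a + d2 b y" using T_lower[OF ab, of x y] by simp
  qed
  then show ?thesis unfolding cross_def by simp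
qed

lemma C: assumes "y \<in> X2" "y' \<in> X2" shows "cross x y' \<le> cross x y + d2 y y'"
proof -
  have "Inf (T x y') - d2 y y' \<le> Inf (T x y)"
  proof (rule T_greatest)
    fix a b assume ab: "(a,b) \<in> R"
    then have "b \<in> X2" using R by auto
    then have "d2 b y' \<le> d2 b y + d2 y y'" using Metric_space.triangle[OF ms2] assms by blast
    then show "Inf (T x y') - d2 y y' \<le> d1 x a + d2 b y" using T_lower[OF ab, of x y'] by simp
  qed
  then show ?thesis unfolding cross_def by simp
qed

lemma B: assumes "x \<in> X1" "x' \<in> X1" "y \<in> X2" shows "d1 x x' \<le> cross x y + cross x' y"
proof -
  have "d1 x x' - 2*r - Inf (T x' y) \<le> Inf (T x y)"
  proof (rule T_greatest)
    fix a b assume ab: "(a,b) \<in> R"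
    have "d1 x x' - 2*r - d1 x a - d2 b y \<le> Inf (T x' y)"
    proof (rule T_greatest)
      fix a' b' assume ab': "(a',b') \<in> R"
      have m: "a \<in> X1" "b \<in> X2" "a' \<in> X1" "b' \<in> X2" using R ab ab' by auto
      have "d1 x x' \<le> d1 x a + d1 a x'" using Metric_space.triangle[OF ms1] assms m by blast
      moreover have "d1 a x' \<le> d1 a a' + d1 a' x'" using Metric_space.triangle[OF ms1] assms m by blast
      moreover have "d1 a a' \<le> d2 b b' + 2*r" using dis[OF ab ab'] by simp
      moreover have "d2 b b' \<le> d2 b y + d2 y b'" using Metric_space.triangle[OF ms2] assms m by blast
      moreover have "d1 a' x' = d1 x' a'" "d2 y b' = d2 b' y"
        using Metric_space.commute[OF ms1] Metric_space.commute[OF ms2] by auto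
      ultimately show "d1 x x' - 2*r - d1 x a - d2 b y \<le> d1 x' a' + d2 b' y" by linarith
    qed
    then show "d1 x x' - 2*r - Inf (T x' y) \<le> d1 x a + d2 b y" by linarith
  qed
  then show ?thesis unfolding cross_def by simp
qed

lemma D: assumes "x \<in> X1" "y \<in> X2" "y' \<in> X2" shows "d2 y y' \<le> cross x y + cross x y'"
proof -
  have "d2 y y' - 2*r - Inf (T x y') \<le> Inf (T x y)"
  proof (rule T_greatest)
    fix a b assume ab: "(a,b) \<in> R"
    have "d2 y y' - 2*r - d1 x a - d2 b y \<le> Inf (T x y')"
    proof (rule T_greatest)
      fix a' b' assume ab': "(a',b') \<in> R"
      have m: "a \<in> X1" "b \<in> X2" "a' \<in> X1" "b' \<in> X2" using R ab ab' by auto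
      have "d2 y y' \<le> d2 y b + d2 b y'" using Metric_space.triangle[OF ms2] assms m by blast
      moreover have "d2 b y' \<le> d2 b b' + d2 b' y'" using Metric_space.triangle[OF ms2] assms m by blast
      moreover have "d2 b b' \<le> d1 a a' + 2*r" using dis[OF ab ab'] by simp
      moreover have "d1 a a' \<le> d1 a x + d1 x a'" using Metric_space.triangle[OF ms1] assms m by blast
      moreover have "d1 a x = d1 x a" "d2 y b = d2 b y"
        using Metric_space.commute[OF ms1] Metric_space.commute[OF ms2] by auto
      ultimately show "d2 y y' - 2*r - d1 x a - d2 b y \<le> d1 x a' + d2 b' y'" by linarith
    qed
    then show "d2 y y' - 2*r - Inf (T x y') \<le> d1 x a + d2 b y" by linarith
  qed
  then show ?thesis unfolding cross_def by simp
qed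

definition dd where
  "dd u v = (case u of Inl x \<Rightarrow> (case v of Inl x' \<Rightarrow> d1 x x' | Inr y \<Rightarrow> cross x y)
                     | Inr y \<Rightarrow> (case v of Inl x \<Rightarrow> cross x y | Inr y' \<Rightarrow> d2 y y'))"

lemma dd_simps [simp]:
  "dd (Inl x) (Inl x') = d1 x x'" "dd (Inl x) (Inr y) = cross x y"
  "dd (Inr y) (Inl x) = cross x y" "dd (Inr y) (Inr y') = d2 y y'"
  by (auto simp: dd_def)

lemma dd_metric: "Metric_space (Inl ` X1 \<union> Inr ` X2) dd"
proof (rule Metric_space.intro)
  fix u v
  show "0 \<le> dd u v" using Metric_space.nonneg[OF ms1] Metric_space.nonneg[OF ms2] cross_pos
    by (cases u; cases v) (auto intro: less_imp_le)
  show "dd u v = dd v u" using Metric_space.commute[OF ms1] Metric_space.commute[OF ms2]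
    by (cases u; cases v) auto
next
  fix u v assume "u \<in> Inl ` X1 \<union> Inr ` X2" "v \<in> Inl ` X1 \<union> Inr ` X2"
  then show "dd u v = 0 \<longleftrightarrow> u = v"
    using Metric_space.zero[OF ms1] Metric_space.zero[OF ms2] cross_pos
    by (auto simp: less_le)
next
  fix u v w assume "u \<in> Inl ` X1 \<union> Inr ` X2" "v \<in> Inl ` X1 \<union> Inr ` X2" "w \<in> Inl ` X1 \<union> Inr ` X2"
  then show "dd u w \<le> dd u v + dd v w"
  proof (elim UnE imageE; simp)
    fix x x' x'' assume "x \<in> X1" "x' \<in> X1" "x'' \<in> X1"
    then show "d1 x x'' \<le> d1 x x' + d1 x' x''" using Metric_space.triangle[OF ms1] by blast
  next
    fix y y' y'' assume "y \<in> X2" "y' \<in> X2" "y'' \<in> X2"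
    then show "d2 y y'' \<le> d2 y y' + d2 y' y''" using Metric_space.triangle[OF ms2] by blast
  qed (auto intro: A B C D simp: Metric_space.commute[OF ms1] Metric_space.commute[OF ms2]
        A[THEN order_trans] C[THEN order_trans])
qed

lemma GH_le: "GH_dist X1 d1 X2 d2 \<le> ereal r"
proof -
  have mem: "dd \<in> {d. Metric_space (Inl ` X1 \<union> Inr ` X2) d
                \<and> (\<forall>x\<in>X1. \<forall>y\<in>X1. d (Inl x) (Inl y) = d1 x y)
                \<and> (\<forall>x\<in>X2. \<forall>y\<in>X2. d (Inr x) (Inr y) = d2 x y)}"
    using dd_metric by simp
  have cr: "cross x y \<le> r" if "(x,y) \<in> R" for x y
  proof -
    have "x \<in> X1" "y \<in> X2" using that R by auto
    then have "d1 x x = 0" "d2 y y = 0" using Metric_space.zero[OF ms1] Metric_space.zero[OF ms2] by auto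
    then show ?thesis using T_lower[OF that, of x y] unfolding cross_def by auto
  qed
  have h1: "(SUP u\<in>Inl ` X1. INF v\<in>Inr ` X2. ereal (dd u v)) \<le> ereal r"
  proof (rule SUP_least)
    fix u :: "'a + 'b" assume "u \<in> Inl ` X1"
    then obtain x where x: "u = Inl x" "x \<in> X1" by auto
    then obtain y where xy: "(x,y) \<in> R" using tot1 by blast
    then have "y \<in> X2" using R by auto
    then show "(INF v\<in>Inr ` X2. ereal (dd u v)) \<le> ereal r"
      using cr[OF xy] x by (intro INF_lower2[of "Inr y"]) auto
  qed
  have h2: "(SUP v\<in>Inr ` X2. INF u\<in>Inl ` X1. ereal (dd u v)) \<le> ereal r"
  proof (rule SUP_least)
    fix v :: "'a + 'b" assume "v \<in> Inr ` X2"
    then obtain y where y: "v = Inr y" "y \<in> X2" by auto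
    then obtain x where xy: "(x,y) \<in> R" using tot2 by blast
    then have "x \<in> X1" using R by auto
    then show "(INF u\<in>Inl ` X1. ereal (dd u v)) \<le> ereal r"
      using cr[OF xy] y by (intro INF_lower2[of "Inl x"]) auto
  qed
  have "GH_dist X1 d1 X2 d2 \<le> hausdorff_dist dd (Inl ` X1) (Inr ` X2)"
    unfolding GH_dist_def by (rule INF_lower[OF mem])
  also have "\<dots> \<le> ereal r" unfolding hausdorff_dist_def using h1 h2 by simp
  finally show ?thesis .
qed

end

lemma chain_final:
  assumes ch: "\<And>n::nat. d < real n * (\<epsilon>/2) \<Longrightarrow> \<forall>\<eta>>0. e \<le> d + real n * (2*\<delta>) + \<eta>"
    and d: "0 \<le> d" "d < D" and eps: "\<epsilon> > 0" and del: "\<delta> \<ge> 0"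
  shows "e \<le> d + 2*(2*D/\<epsilon>+1)*\<delta>"
proof -
  define t where "t = 2*d/\<epsilon>"
  define n where "n = nat \<lfloor>t\<rfloor> + 1"
  have t0: "t \<ge> 0" using d eps t_def by simp
  have f1: "real_of_int \<lfloor>t\<rfloor> \<le> t" by (rule of_int_floor_le)
  have f2: "t < real_of_int \<lfloor>t\<rfloor> + 1" by (rule real_of_int_floor_add_one_gt)
  have fz: "0 \<le> \<lfloor>t\<rfloor>" using t0 by simp
  have rn: "real n = real_of_int \<lfloor>t\<rfloor> + 1" unfolding n_def using fz by simp
  have "t < real n" using rn f2 by linarith
  then have "d < real n * (\<epsilon>/2)" using eps unfolding t_def by (simp add: field_simps)
  then have e1: "\<forall>\<eta>>0. e \<le> d + real n * (2*\<delta>) + \<eta>" by (rule ch)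
  have "real n \<le> t + 1" using rn f1 by linarith
  also have "t \<le> 2*D/\<epsilon>" unfolding t_def using d eps divide_right_mono[of "2*d" "2*D" \<epsilon>] by linarith
  finally have "real n \<le> 2*D/\<epsilon>+1" by simp
  then have "real n * (2*\<delta>) \<le> (2*D/\<epsilon>+1) * (2*\<delta>)" using del by (intro mult_right_mono) auto
  have "e \<le> d + (2*D/\<epsilon>+1) * (2*\<delta>)"
  proof (rule field_le_epsilon)
    fix \<eta> :: real assume "0 < \<eta>"
    then have "e \<le> d + real n * (2*\<delta>) + \<eta>" using e1 by blast
    then show "e \<le> d + (2*D/\<epsilon>+1) * (2*\<delta>) + \<eta>" using \<open>real n * (2*\<delta>) \<le> (2*D/\<epsilon>+1) * (2*\<delta>)\<close> by linarith
  qed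
  then show ?thesis by (simp add: algebra_simps)
qed

lemma abs_tri_lemma: "\<bar>a - b\<bar> \<le> \<bar>a - c\<bar> + \<bar>c - e\<bar> + \<bar>e - b\<bar>" for a b c e :: real
  by linarith

lemma distortion:
  assumes eps: "\<epsilon> > 0" "D > 0"
    and LS1: "length_space X1 d1" and LS2: "length_space X2 d2"
    and S1: "S1 \<subseteq> X1" and S2: "S2 \<subseteq> X2"
    and diam1: "mdiam X1 d1 < ereal D" and diam2: "mdiam X2 d2 < ereal D"
    and B1: "BLIE \<epsilon> X1 d1 S1" and B2: "BLIE \<epsilon> X2 d2 S2"
    and phi: "\<phi> ` S1 = S2"
    and del: "\<delta> \<ge> 0"
    and tot1: "\<forall>p\<in>X1. \<exists>q\<in>X2. \<forall>z\<in>S1. \<bar>d1 p z - d2 q (\<phi> z)\<bar> \<le> \<delta>"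
    and tot2: "\<forall>q\<in>X2. \<exists>p\<in>X1. \<forall>z\<in>S1. \<bar>d1 p z - d2 q (\<phi> z)\<bar> \<le> \<delta>"
    and pq: "p \<in> X1" "p' \<in> X1" "q \<in> X2" "q' \<in> X2"
    and cl: "\<forall>z\<in>S1. \<bar>d1 p z - d2 q (\<phi> z)\<bar> \<le> \<delta>" and cl': "\<forall>z\<in>S1. \<bar>d1 p' z - d2 q' (\<phi> z)\<bar> \<le> \<delta>"
  shows "\<bar>d1 p p' - d2 q q'\<bar> \<le> 2*(2*D/\<epsilon>+1)*\<delta>"
proof -
  have ms1: "Metric_space X1 d1" using LS1 length_space_def by blast
  have ms2: "Metric_space X2 d2" using LS2 length_space_def by blast
  have D1: "d1 p p' < D" using mdiam_bound[OF pq(1,2) diam1] .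
  have D2: "d2 q q' < D" using mdiam_bound[OF pq(3,4) diam2] .
  have n1: "0 \<le> d1 p p'" "0 \<le> d2 q q'" using Metric_space.nonneg[OF ms1] Metric_space.nonneg[OF ms2] by auto
  show ?thesis
  proof (cases "4*\<delta> > \<epsilon>")
    case True
    have "D * \<epsilon> \<le> D * (4*\<delta>)" using True eps by (intro mult_left_mono) auto
    then have "D \<le> D * (4*\<delta>) / \<epsilon>" using eps by (simp add: le_divide_eq)
    also have "\<dots> \<le> 2*(2*D/\<epsilon>+1)*\<delta>" using eps del by (simp add: field_simps)
    finally show ?thesis using D1 D2 n1 by linarith
  next
    case False
    define R where "R = {(x,y). x \<in> X1 \<and> y \<in> X2 \<and> (\<forall>z\<in>S1. \<bar>d1 x z - d2 y (\<phi> z)\<bar> \<le> \<delta>)}"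
    define R' where "R' = {(y,x). x \<in> X1 \<and> y \<in> X2 \<and> (\<forall>z\<in>S1. \<bar>d1 x z - d2 y (\<phi> z)\<bar> \<le> \<delta>)}"
    have lip1: "\<bar>d1 x z - d1 x' z\<bar> \<le> d1 x x'" if "x \<in> X1" "x' \<in> X1" "z \<in> X1" for x x' z
      using Metric_space.triangle[OF ms1, of x x' z] Metric_space.triangle[OF ms1, of x' x z]
        Metric_space.commute[OF ms1, of x x'] that by (simp add: abs_le_iff)
    have lip2: "\<bar>d2 x z - d2 x' z\<bar> \<le> d2 x x'" if "x \<in> X2" "x' \<in> X2" "z \<in> X2" for x x' z
      using Metric_space.triangle[OF ms2, of x x' z] Metric_space.triangle[OF ms2, of x' x z]
        Metric_space.commute[OF ms2, of x x'] that by (simp add: abs_le_iff)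
    have step1: "d2 y y' \<le> d1 x x' + 2*\<delta>" if "(x,y)\<in>R" "(x',y')\<in>R" "d1 x x' < \<epsilon>/2" for x y x' y'
    proof (rule loc_iso_bound[OF ms2 S2 B2])
      show "y \<in> X2" "y' \<in> X2" using that R_def by auto
      show "d1 x x' + 2*\<delta> < \<epsilon>" using that False by simp
      show "0 \<le> d1 x x' + 2*\<delta>" using del Metric_space.nonneg[OF ms1] by simp
      show "\<forall>w\<in>S2. \<bar>d2 y w - d2 y' w\<bar> \<le> d1 x x' + 2 * \<delta>"
      proof
        fix w assume "w \<in> S2"
        then obtain z where z: "z \<in> S1" "w = \<phi> z" using phi by auto
        have "\<bar>d2 y w - d2 y' w\<bar> \<le> \<bar>d2 y w - d1 x z\<bar> + \<bar>d1 x z - d1 x' z\<bar> + \<bar>d1 x' z - d2 y' w\<bar>"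
          by (rule abs_tri_lemma)
        moreover have "\<bar>d1 x z - d1 x' z\<bar> \<le> d1 x x'" using lip1 that z S1 R_def by auto
        moreover have "\<bar>d2 y w - d1 x z\<bar> \<le> \<delta>" "\<bar>d1 x' z - d2 y' w\<bar> \<le> \<delta>"
          using that z R_def by (auto simp: abs_minus_commute)
        ultimately show "\<bar>d2 y w - d2 y' w\<bar> \<le> d1 x x' + 2 * \<delta>" by linarith
      qed
    qed
    have step2: "d1 x x' \<le> d2 y y' + 2*\<delta>" if "(y,x)\<in>R'" "(y',x')\<in>R'" "d2 y y' < \<epsilon>/2" for x y x' y'
    proof (rule loc_iso_bound[OF ms1 S1 B1])
      show "x \<in> X1" "x' \<in> X1" using that R'_def by auto
      show "d2 y y' + 2*\<delta> < \<epsilon>" using that False by simp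
      show "0 \<le> d2 y y' + 2*\<delta>" using del Metric_space.nonneg[OF ms2] by simp
      show "\<forall>z\<in>S1. \<bar>d1 x z - d1 x' z\<bar> \<le> d2 y y' + 2 * \<delta>"
      proof
        fix z assume z: "z \<in> S1"
        have "\<bar>d1 x z - d1 x' z\<bar> \<le> \<bar>d1 x z - d2 y (\<phi> z)\<bar> + \<bar>d2 y (\<phi> z) - d2 y' (\<phi> z)\<bar> + \<bar>d2 y' (\<phi> z) - d1 x' z\<bar>"
          by (rule abs_tri_lemma)
        moreover have "\<phi> z \<in> X2" using z phi S2 by auto
        then have "\<bar>d2 y (\<phi> z) - d2 y' (\<phi> z)\<bar> \<le> d2 y y'" using lip2 that R'_def by auto
        moreover have "\<bar>d1 x z - d2 y (\<phi> z)\<bar> \<le> \<delta>" "\<bar>d2 y' (\<phi> z) - d1 x' z\<bar> \<le> \<delta>"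
          using that z R'_def by (auto simp: abs_minus_commute)
        ultimately show "\<bar>d1 x z - d1 x' z\<bar> \<le> d2 y y' + 2 * \<delta>" by linarith
      qed
    qed
    have ch1: "\<forall>x y x' y' \<eta>. (x,y)\<in>R \<longrightarrow> (x',y')\<in>R \<longrightarrow> d1 x x' < real n * (\<epsilon>/2) \<longrightarrow> \<eta> > 0
            \<longrightarrow> d2 y y' \<le> d1 x x' + real n * (2*\<delta>) + \<eta>" for n
    proof (rule chain[OF LS1 ms2])
      show "R \<subseteq> X1 \<times> X2" unfolding R_def by auto
      show "\<forall>x\<in>X1. \<exists>y. (x, y) \<in> R" using tot1 unfolding R_def by blast
    qed (use step1 eps del in auto)
    have ch2: "\<forall>x y x' y' \<eta>. (x,y)\<in>R' \<longrightarrow> (x',y')\<in>R' \<longrightarrow> d2 x x' < real n * (\<epsilon>/2) \<longrightarrow> \<eta> > 0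
            \<longrightarrow> d1 y y' \<le> d2 x x' + real n * (2*\<delta>) + \<eta>" for n
    proof (rule chain[OF LS2 ms1])
      show "R' \<subseteq> X2 \<times> X1" unfolding R'_def by auto
      show "\<forall>x\<in>X2. \<exists>y. (x, y) \<in> R'" using tot2 unfolding R'_def by blast
    qed (use step2 eps del in auto)
    have pR: "(p,q) \<in> R" "(p',q') \<in> R" using pq cl cl' R_def by auto
    have pR': "(q,p) \<in> R'" "(q',p') \<in> R'" using pq cl cl' R'_def by auto
    have "d2 q q' \<le> d1 p p' + 2*(2*D/\<epsilon>+1)*\<delta>"
      by (rule chain_final[OF _ n1(1) D1 eps(1) del]) (use ch1 pR in blast)
    moreover have "d1 p p' \<le> d2 q q' + 2*(2*D/\<epsilon>+1)*\<delta>"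
      by (rule chain_final[OF _ n1(2) D2 eps(1) del]) (use ch2 pR' in blast)
    ultimately show ?thesis by linarith
  qed
qed

lemma exact_tot:
  assumes ms: "Metric_space X d" and cpt: "compact_space (mtop X d)"
    and lip: "\<And>x x' z. x\<in>X \<Longrightarrow> x'\<in>X \<Longrightarrow> z\<in>S \<Longrightarrow> \<bar>f x z - f x' z\<bar> \<le> d x x'"
    and appr: "\<And>\<eta>. \<eta> > 0 \<Longrightarrow> \<exists>x\<in>X. \<forall>z\<in>S. \<bar>f x z - h z\<bar> \<le> \<eta>"
  shows "\<exists>x\<in>X. \<forall>z\<in>S. f x z = h z"
proof -
  have "\<forall>n::nat. \<exists>x\<in>X. \<forall>z\<in>S. \<bar>f x z - h z\<bar> \<le> 1/(real n+1)"
    using appr by (simp add: add_pos_nonneg)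
  then obtain \<sigma> where \<sigma>: "\<And>n. \<sigma> n \<in> X" "\<And>n z. z\<in>S \<Longrightarrow> \<bar>f (\<sigma> n) z - h z\<bar> \<le> 1/(real n+1)"
    by metis
  have "range \<sigma> \<subseteq> X" using \<sigma> by auto
  then obtain l r where l: "l\<in>X" "strict_mono r" "limitin (mtop X d) (\<sigma> \<circ> r) l sequentially"
    using cpt Metric_space.compact_space_sequentially[OF ms] by blast
  have lim: "\<forall>\<epsilon>>0. eventually (\<lambda>n. (\<sigma>\<circ>r) n \<in> X \<and> d ((\<sigma>\<circ>r) n) l < \<epsilon>) sequentially"
    using l(3) Metric_space.limitin_metric[OF ms] by blast
  show ?thesis
  proof (rule bexI[OF _ l(1)], rule ballI, rule ccontr)
    fix z assume z: "z\<in>S" and ne: "f l z \<noteq> h z"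
    define c where "c = \<bar>f l z - h z\<bar>"
    have c: "c > 0" using ne c_def by simp
    obtain N where N: "inverse (real (Suc N)) < c/2" using reals_Archimedean[of "c/2"] c by auto
    have "eventually (\<lambda>n. (\<sigma>\<circ>r) n \<in> X \<and> d ((\<sigma>\<circ>r) n) l < c/2) sequentially"
      using lim c by (metis half_gt_zero)
    then obtain M where M: "\<And>n. n \<ge> M \<Longrightarrow> d (\<sigma> (r n)) l < c/2"
      unfolding eventually_sequentially by auto
    define n where "n = max M N"
    have rn: "r n \<ge> n" by (rule seq_suble[OF l(2)])
    have "real (Suc N) \<le> real (r n) + 1" using rn n_def by simp
    then have i1: "1/(real (r n)+1) \<le> inverse (real (Suc N))"
      by (simp add: inverse_eq_divide frac_le)
    have a1: "\<bar>f (\<sigma> (r n)) z - h z\<bar> \<le> 1/(real (r n)+1)" using \<sigma>(2) z by blast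
    have a2: "\<bar>f l z - f (\<sigma> (r n)) z\<bar> \<le> d l (\<sigma> (r n))" using lip l(1) \<sigma>(1) z by blast
    have a3: "d l (\<sigma> (r n)) < c/2" using M[of n] n_def Metric_space.commute[OF ms] by simp
    have "c \<le> \<bar>f l z - f (\<sigma> (r n)) z\<bar> + \<bar>f (\<sigma> (r n)) z - h z\<bar>" unfolding c_def by linarith
    then show False using a1 a2 a3 i1 N by linarith
  qed
qed

lemma close_from_haus:
  assumes ms1: "Metric_space X1 d1" and ms2: "Metric_space X2 d2" and S1: "S1 \<subseteq> X1"
    and psi: "\<psi> ` S1 \<subseteq> X2"
    and diam1: "mdiam X1 d1 < ereal D" and diam2: "mdiam X2 d2 < ereal D"
    and H: "hausdorff_dist (sup_dist S1) (travel_time_data X1 d1 S1)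
               (travel_time_data_phi X2 d2 S1 \<psi>) < ereal \<delta>"
  shows "\<forall>p\<in>X1. \<exists>q\<in>X2. \<forall>z\<in>S1. \<bar>d1 p z - d2 q (\<psi> z)\<bar> \<le> \<delta>"
    and "\<forall>q\<in>X2. \<exists>p\<in>X1. \<forall>z\<in>S1. \<bar>d1 p z - d2 q (\<psi> z)\<bar> \<le> \<delta>"
    and "X1 \<noteq> {} \<Longrightarrow> \<delta> > 0"
proof -
  have key: "\<delta> > 0 \<and> (\<forall>z\<in>S1. \<bar>d1 p z - d2 q (\<psi> z)\<bar> \<le> \<delta>)"
    if pq: "p \<in> X1" "q \<in> X2"
      and sd: "sup_dist S1 (travel_time_map d1 S1 p) (restrict (\<lambda>z. d2 q (\<psi> z)) S1) < \<delta>" for p q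
  proof -
    let ?F = "travel_time_map d1 S1 p" and ?G = "restrict (\<lambda>z. d2 q (\<psi> z)) S1"
    have bd: "bdd_above ((\<lambda>z. \<bar>?F z - ?G z\<bar>) ` S1)"
    proof (rule bdd_aboveI2[of _ _ "2*D"])
      fix z assume z: "z \<in> S1"
      have "d1 p z < D" using mdiam_bound[OF pq(1) _ diam1] z S1 by auto
      moreover have "d2 q (\<psi> z) < D" using mdiam_bound[OF pq(2) _ diam2] z psi by auto
      moreover have "0 \<le> d1 p z" "0 \<le> d2 q (\<psi> z)"
        using Metric_space.nonneg[OF ms1] Metric_space.nonneg[OF ms2] by auto
      ultimately show "\<bar>?F z - ?G z\<bar> \<le> 2*D" using z by (simp add: travel_time_map_def)
    qed
    have "0 \<le> sup_dist S1 ?F ?G" by (rule sup_dist_nonneg[OF bd])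
    moreover have "\<forall>z\<in>S1. \<bar>d1 p z - d2 q (\<psi> z)\<bar> \<le> \<delta>"
    proof
      fix z assume z: "z \<in> S1"
      have "\<bar>?F z - ?G z\<bar> \<le> sup_dist S1 ?F ?G" by (rule sup_dist_pw[OF bd z])
      then show "\<bar>d1 p z - d2 q (\<psi> z)\<bar> \<le> \<delta>" using z sd by (simp add: travel_time_map_def)
    qed
    ultimately show ?thesis using sd by simp
  qed
  show t1: "\<forall>p\<in>X1. \<exists>q\<in>X2. \<forall>z\<in>S1. \<bar>d1 p z - d2 q (\<psi> z)\<bar> \<le> \<delta>"
  proof
    fix p assume p: "p \<in> X1"
    obtain b where b: "b \<in> travel_time_data_phi X2 d2 S1 \<psi>"
        "sup_dist S1 (travel_time_map d1 S1 p) b < \<delta>"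
      using haus_left[OF H, of "travel_time_map d1 S1 p"] p unfolding travel_time_data_def by auto
    then obtain q where "q \<in> X2" "b = restrict (\<lambda>z. d2 q (\<psi> z)) S1"
      unfolding travel_time_data_phi_def by auto
    then show "\<exists>q\<in>X2. \<forall>z\<in>S1. \<bar>d1 p z - d2 q (\<psi> z)\<bar> \<le> \<delta>" using key[OF p] b by blast
  qed
  show "\<forall>q\<in>X2. \<exists>p\<in>X1. \<forall>z\<in>S1. \<bar>d1 p z - d2 q (\<psi> z)\<bar> \<le> \<delta>"
  proof
    fix q assume q: "q \<in> X2"
    obtain a where a: "a \<in> travel_time_data X1 d1 S1"
        "sup_dist S1 a (restrict (\<lambda>z. d2 q (\<psi> z)) S1) < \<delta>"
      using haus_right[OF H, of "restrict (\<lambda>z. d2 q (\<psi> z)) S1"] q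
      unfolding travel_time_data_phi_def by auto
    then obtain p where "p \<in> X1" "a = travel_time_map d1 S1 p"
      unfolding travel_time_data_def by auto
    then show "\<exists>p\<in>X1. \<forall>z\<in>S1. \<bar>d1 p z - d2 q (\<psi> z)\<bar> \<le> \<delta>" using key[OF _ q] a by blast
  qed
  assume "X1 \<noteq> {}"
  then obtain p where p: "p \<in> X1" by auto
  obtain b where b: "b \<in> travel_time_data_phi X2 d2 S1 \<psi>"
      "sup_dist S1 (travel_time_map d1 S1 p) b < \<delta>"
    using haus_left[OF H, of "travel_time_map d1 S1 p"] p unfolding travel_time_data_def by auto
  then obtain q where "q \<in> X2" "b = restrict (\<lambda>z. d2 q (\<psi> z)) S1"
    unfolding travel_time_data_phi_def by auto
  then show "\<delta> > 0" using key[OF p] b by blast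
qed

theorem mainTheorem1:
  fixes X1 :: "'a set" and d1 :: "'a \<Rightarrow> 'a \<Rightarrow> real" and S1 :: "'a set"
    and X2 :: "'b set" and d2 :: "'b \<Rightarrow> 'b \<Rightarrow> real" and S2 :: "'b set"
    and \<phi> :: "'a \<Rightarrow> 'b" and \<epsilon> D :: real
  assumes "\<epsilon> > 0" and "D > 0"
    and "length_space X1 d1" and "compact_space (mtop X1 d1)" and "closedin (mtop X1 d1) S1"
    and "length_space X2 d2" and "compact_space (mtop X2 d2)" and "closedin (mtop X2 d2) S2"
    and "mdiam X1 d1 < ereal D" and "mdiam X2 d2 < ereal D"
    and "BLIE \<epsilon> X1 d1 S1" and "BLIE \<epsilon> X2 d2 S2"
    and "homeomorphic_map (subtopology (mtop X1 d1) S1) (subtopology (mtop X2 d2) S2) \<phi>"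
  shows "GH_dist X1 d1 X2 d2 \<le>
           ereal (2 * D / \<epsilon> + 1) *
             hausdorff_dist (sup_dist S1) (travel_time_data X1 d1 S1)
               (travel_time_data_phi X2 d2 S1 \<phi>)
         \<and> ((\<exists>\<psi>. homeomorphic_map (subtopology (mtop X1 d1) S1) (subtopology (mtop X2 d2) S2) \<psi>
              \<and> hausdorff_dist (sup_dist S1) (travel_time_data X1 d1 S1)
                  (travel_time_data_phi X2 d2 S1 \<psi>) = 0)
         \<longrightarrow> isometric X1 d1 X2 d2)"
proof -
  note A = assms
  have ms1: "Metric_space X1 d1" using A(3) length_space_def by blast
  have ms2: "Metric_space X2 d2" using A(6) length_space_def by blast
  have S1: "S1 \<subseteq> X1" using closedin_subset[OF A(5)] Metric_space.topspace_mtopology[OF ms1] by simp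
  have S2: "S2 \<subseteq> X2" using closedin_subset[OF A(8)] Metric_space.topspace_mtopology[OF ms2] by simp
  have homS: "\<psi> ` S1 = S2"
    if "homeomorphic_map (subtopology (mtop X1 d1) S1) (subtopology (mtop X2 d2) S2) \<psi>" for \<psi>
    using homeomorphic_imp_surjective_map[OF that] S1 S2
    by (simp add: Metric_space.topspace_mtopology[OF ms1] Metric_space.topspace_mtopology[OF ms2]
        Int_absorb1 inf.absorb2)
  define K where "K = 2 * D / \<epsilon> + 1"
  have K: "K > 0" using A(1,2) K_def by (simp add: add_pos_nonneg)
  have claim: "GH_dist X1 d1 X2 d2 \<le> ereal (K * \<delta>)"
    if hom: "homeomorphic_map (subtopology (mtop X1 d1) S1) (subtopology (mtop X2 d2) S2) \<psi>"
      and ne: "X1 \<noteq> {}"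
      and H: "hausdorff_dist (sup_dist S1) (travel_time_data X1 d1 S1) (travel_time_data_phi X2 d2 S1 \<psi>) < ereal \<delta>"
    for \<psi> \<delta>
  proof -
    have psi: "\<psi> ` S1 = S2" using homS[OF hom] .
    have psi': "\<psi> ` S1 \<subseteq> X2" using psi S2 by simp
    note ch = close_from_haus[OF ms1 ms2 S1 psi' A(9) A(10) H]
    have d: "\<delta> > 0" using ch(3)[OF ne] .
    define R where "R = {(x,y). x \<in> X1 \<and> y \<in> X2 \<and> (\<forall>z\<in>S1. \<bar>d1 x z - d2 y (\<psi> z)\<bar> \<le> \<delta>)}"
    interpret corr X1 d1 X2 d2 R "K * \<delta>"
    proof (rule corr.intro)
      show "Metric_space X1 d1" "Metric_space X2 d2" "X1 \<noteq> {}" by (fact ms1, fact ms2, fact ne)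
      show "R \<subseteq> X1 \<times> X2" unfolding R_def by auto
      show "\<forall>x\<in>X1. \<exists>y. (x, y) \<in> R" using ch(1) unfolding R_def by blast
      show "\<forall>y\<in>X2. \<exists>x. (x, y) \<in> R" using ch(2) unfolding R_def by blast
      show "0 < K * \<delta>" using K d by simp
      fix x y x' y' assume "(x, y) \<in> R" "(x', y') \<in> R"
      then have "\<bar>d1 x x' - d2 y y'\<bar> \<le> 2*(2*D/\<epsilon>+1)*\<delta>"
        using distortion[OF A(1,2,3,6) S1 S2 A(9,10,11,12) psi less_imp_le[OF d] ch(1) ch(2)]
        unfolding R_def by blast
      then show "\<bar>d1 x x' - d2 y y'\<bar> \<le> 2 * (K * \<delta>)" unfolding K_def by (simp add: algebra_simps)
    qed
    show ?thesis by (rule GH_le)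
  qed
  let ?H = "hausdorff_dist (sup_dist S1) (travel_time_data X1 d1 S1) (travel_time_data_phi X2 d2 S1 \<phi>)"
  have part1: "GH_dist X1 d1 X2 d2 \<le> ereal K * ?H"
  proof (cases "X1 = {} \<and> X2 = {}")
    case True
    have met: "Metric_space (Inl ` X1 \<union> Inr ` X2) (\<lambda>_ _. 0::real)"
      using True by (intro Metric_space.intro) auto
    have "GH_dist X1 d1 X2 d2 \<le> hausdorff_dist (\<lambda>_ _. 0) (Inl ` X1) (Inr ` X2)"
      unfolding GH_dist_def by (rule INF_lower) (use met True in auto)
    also have "\<dots> = -\<infinity>" using True by (simp add: hausdorff_dist_def bot_ereal_def)
    finally show ?thesis by simp
  next
    case False
    show ?thesis
    proof (cases "?H = \<infinity>")
      case True
      then show ?thesis using K by simp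
    next
      case Hn: False
      have ne1: "X1 \<noteq> {}"
      proof
        assume e: "X1 = {}"
        then have "X2 \<noteq> {}" using False by simp
        then have "?H = \<infinity>" using e
          by (simp add: hausdorff_dist_def travel_time_data_def travel_time_data_phi_def top_ereal_def)
        then show False using Hn by simp
      qed
      show ?thesis
      proof (cases ?H)
        case (real h)
        show ?thesis
        proof (rule ereal_le_epsilon2)
          fix e :: real assume e: "0 < e"
          have "?H < ereal (h + e / K)" using real e K by simp
          then have "GH_dist X1 d1 X2 d2 \<le> ereal (K * (h + e / K))" by (rule claim[OF A(13) ne1])
          also have "K * (h + e / K) = K * h + e" using K by (simp add: field_simps)
          finally show "GH_dist X1 d1 X2 d2 \<le> ereal K * ?H + ereal e" using real by simp
        qed
      next
        case PInf then show ?thesis using Hn by simp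
      next
        case MInf
        then have "?H < ereal (-1)" by simp
        then have "(-1::real) > 0"
          using close_from_haus(3)[OF ms1 ms2 S1 _ A(9) A(10) _ ne1] homS[OF A(13)] S2 by blast
        then show ?thesis by simp
      qed
    qed
  qed
  have part2: "isometric X1 d1 X2 d2"
    if ex: "\<exists>\<psi>. homeomorphic_map (subtopology (mtop X1 d1) S1) (subtopology (mtop X2 d2) S2) \<psi>
              \<and> hausdorff_dist (sup_dist S1) (travel_time_data X1 d1 S1)
                  (travel_time_data_phi X2 d2 S1 \<psi>) = 0"
  proof -
    obtain \<psi> where hom: "homeomorphic_map (subtopology (mtop X1 d1) S1) (subtopology (mtop X2 d2) S2) \<psi>"
      and H0: "hausdorff_dist (sup_dist S1) (travel_time_data X1 d1 S1) (travel_time_data_phi X2 d2 S1 \<psi>) = 0"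
      using ex by blast
    have psi: "\<psi> ` S1 = S2" using homS[OF hom] .
    have psi': "\<psi> ` S1 \<subseteq> X2" using psi S2 by simp
    have Hd: "hausdorff_dist (sup_dist S1) (travel_time_data X1 d1 S1) (travel_time_data_phi X2 d2 S1 \<psi>) < ereal \<delta>"
      if "\<delta> > 0" for \<delta> using H0 that by simp
    note ch1 = close_from_haus(1)[OF ms1 ms2 S1 psi' A(9) A(10) Hd]
    note ch2 = close_from_haus(2)[OF ms1 ms2 S1 psi' A(9) A(10) Hd]
    have lip1: "\<bar>d1 x z - d1 x' z\<bar> \<le> d1 x x'" if "x \<in> X1" "x' \<in> X1" "z \<in> X1" for x x' z
      using Metric_space.triangle[OF ms1, of x x' z] Metric_space.triangle[OF ms1, of x' x z]
        Metric_space.commute[OF ms1, of x x'] that by (simp add: abs_le_iff)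
    have lip2: "\<bar>d2 x z - d2 x' z\<bar> \<le> d2 x x'" if "x \<in> X2" "x' \<in> X2" "z \<in> X2" for x x' z
      using Metric_space.triangle[OF ms2, of x x' z] Metric_space.triangle[OF ms2, of x' x z]
        Metric_space.commute[OF ms2, of x x'] that by (simp add: abs_le_iff)
    have ex1: "\<exists>q\<in>X2. \<forall>z\<in>S1. d2 q (\<psi> z) = d1 p z" if p: "p \<in> X1" for p
    proof (rule exact_tot[OF ms2 A(7)])
      show "\<bar>d2 x (\<psi> z) - d2 x' (\<psi> z)\<bar> \<le> d2 x x'" if "x \<in> X2" "x' \<in> X2" "z \<in> S1" for x x' z
        using lip2 that psi' by blast
      fix \<eta> :: real assume "\<eta> > 0"
      then show "\<exists>q\<in>X2. \<forall>z\<in>S1. \<bar>d2 q (\<psi> z) - d1 p z\<bar> \<le> \<eta>"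
        using ch1 p by (simp add: abs_minus_commute)
    qed
    have ex2: "\<exists>p\<in>X1. \<forall>z\<in>S1. d1 p z = d2 q (\<psi> z)" if q: "q \<in> X2" for q
    proof (rule exact_tot[OF ms1 A(4)])
      show "\<bar>d1 x z - d1 x' z\<bar> \<le> d1 x x'" if "x \<in> X1" "x' \<in> X1" "z \<in> S1" for x x' z
        using lip1 that S1 by blast
      fix \<eta> :: real assume "\<eta> > 0"
      then show "\<exists>p\<in>X1. \<forall>z\<in>S1. \<bar>d1 p z - d2 q (\<psi> z)\<bar> \<le> \<eta>"
        using ch2 q by simp
    qed
    have dis0: "d1 p p' = d2 q q'"
      if pq: "p \<in> X1" "p' \<in> X1" "q \<in> X2" "q' \<in> X2"
        and c: "\<forall>z\<in>S1. d2 q (\<psi> z) = d1 p z" and c': "\<forall>z\<in>S1. d2 q' (\<psi> z) = d1 p' z" for p p' q q'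
    proof (rule ccontr)
      assume ne: "d1 p p' \<noteq> d2 q q'"
      define x where "x = \<bar>d1 p p' - d2 q q'\<bar>"
      have x: "x > 0" using ne x_def by simp
      define \<delta> where "\<delta> = x / (4 * K)"
      have d: "\<delta> > 0" using x K \<delta>_def by simp
      have "x \<le> 2*(2*D/\<epsilon>+1)*\<delta>" unfolding x_def
        by (rule distortion[OF A(1,2,3,6) S1 S2 A(9,10,11,12) psi less_imp_le[OF d] ch1[OF d] ch2[OF d] pq])
           (use c c' d in auto)
      also have "\<dots> = x / 2" unfolding \<delta>_def K_def[symmetric] using K by (simp add: field_simps)
      finally show False using x by simp
    qed
    define f where "f p = (SOME q. q \<in> X2 \<and> (\<forall>z\<in>S1. d2 q (\<psi> z) = d1 p z))" for p
    have fp: "f p \<in> X2 \<and> (\<forall>z\<in>S1. d2 (f p) (\<psi> z) = d1 p z)" if pX: "p \<in> X1" for p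
    proof -
      obtain q where "q \<in> X2 \<and> (\<forall>z\<in>S1. d2 q (\<psi> z) = d1 p z)" using ex1[OF pX] by blast
      then show ?thesis unfolding f_def by (rule someI)
    qed
    have iso: "d2 (f x) (f y) = d1 x y" if xy: "x \<in> X1" "y \<in> X1" for x y
    proof -
      have a: "f x \<in> X2" "\<forall>z\<in>S1. d2 (f x) (\<psi> z) = d1 x z" using fp[OF xy(1)] by auto
      have b: "f y \<in> X2" "\<forall>z\<in>S1. d2 (f y) (\<psi> z) = d1 y z" using fp[OF xy(2)] by auto
      show ?thesis using dis0[OF xy(1,2) a(1) b(1) a(2) b(2)] by simp
    qed
    show ?thesis unfolding isometric_def
    proof (intro exI conjI)
      show "\<forall>x\<in>X1. \<forall>y\<in>X1. d2 (f x) (f y) = d1 x y" using iso by blast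
      show "bij_betw f X1 X2"
      proof (rule bij_betw_imageI)
        show "inj_on f X1"
        proof
          fix x y assume xy: "x \<in> X1" "y \<in> X1" "f x = f y"
          have "f x \<in> X2" using fp[OF xy(1)] by simp
          then have "d2 (f x) (f y) = 0" using xy(3) Metric_space.zero[OF ms2] by simp
          then have "d1 x y = 0" using iso[OF xy(1,2)] by simp
          then show "x = y" using Metric_space.zero[OF ms1] xy by blast
        qed
        show "f ` X1 = X2"
        proof
          show "f ` X1 \<subseteq> X2" using fp by blast
          show "X2 \<subseteq> f ` X1"
          proof
            fix q assume q: "q \<in> X2"
            then obtain p where p: "p \<in> X1" "\<forall>z\<in>S1. d1 p z = d2 q (\<psi> z)" using ex2 by blast
            have a: "f p \<in> X2" "\<forall>z\<in>S1. d2 (f p) (\<psi> z) = d1 p z" using fp[OF p(1)] by auto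
            have b: "\<forall>z\<in>S1. d2 q (\<psi> z) = d1 p z" using p(2) by simp
            have "d1 p p = d2 (f p) q" by (rule dis0[OF p(1) p(1) a(1) q a(2) b])
            moreover have "d1 p p = 0" using Metric_space.zero[OF ms1] p(1) by simp
            ultimately have "d2 (f p) q = 0" by simp
            then have "f p = q" using Metric_space.zero[OF ms2] a(1) q by simp
            then show "q \<in> f ` X1" using p(1) by blast
          qed
        qed
      qed
    qed
  qed
  show ?thesis using part1 part2 unfolding K_def by blast
qed

end
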